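(* Let $d\geq 3$ be an integer and let $\rho_d^{(w)}=\frac{d+1}{d^3}I_{\mathbb{C}^d\otimes\mathbb{C}^d}-\frac{1}{d^2}V_d$ be the Werner state on $\mathbb{C}^d\otimes\mathbb{C}^d$, where $V_d$ is the flip operator, $V_d(\psi_1\otimes\psi_2)=\psi_2\otimes\psi_1$. Then for any three self-adjoint operators $J^{(a)},J^{(b_1)},J^{(b_2)}$ on $\mathbb{C}^d$ with operator norms $\|J^{(a)}\|,\|J^{(b_1)}\|,\|J^{(b_2)}\|\leq 1$, $$\Big|\,\mathrm{tr}\big[\rho_d^{(w)}(J^{(a)}\otimes J^{(b_1)})\big]-\mathrm{tr}\big[\rho_d^{(w)}(J^{(a)}\otimes J^{(b_2)})\big]\,\Big|\leq 1-\mathrm{tr}\big[\rho_d^{(w)}(J^{(b_1)}\otimes J^{(b_2)})\big].$$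
   Context: This is the perfect correlation form of the original Bell inequality for the Werner state; no assumption of perfect correlation $\mathrm{tr}[\rho_d^{(w)}(J^{(b_1)}\otimes J^{(b_1)})]=1$ is made. *)

theory Defs
  imports "HOL-Analysis.Analysis"
begin

text \<open>Matrices on C^n are complex^'n^'n (row index first); C^n (x) C^n is indexed by 'n \<times> 'n.\<close>

definition kron :: "complex^'n::finite^'n \<Rightarrow> complex^'m::finite^'m \<Rightarrow> complex^('n \<times> 'm)^('n \<times> 'm)" where
  "kron A B = (\<chi> p q. A $ fst p $ fst q * B $ snd p $ snd q)"

definition flip_op :: "complex^('n::finite \<times> 'n)^('n \<times> 'n)" where
  "flip_op = (\<chi> p q. if fst p = snd q \<and> snd p = fst q then 1 else 0)"

definition werner :: "complex^('n::finite \<times> 'n)^('n \<times> 'n)" where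
  "werner = (let d = complex_of_nat CARD('n) in
     (\<chi> p q. (d + 1) / d ^ 3 * (mat 1 :: complex^('n \<times> 'n)^('n \<times> 'n)) $ p $ q
             - 1 / d ^ 2 * (flip_op :: complex^('n \<times> 'n)^('n \<times> 'n)) $ p $ q))"

definition self_adjoint :: "complex^'n::finite^'n \<Rightarrow> bool" where
  "self_adjoint A \<longleftrightarrow> (\<forall>i j. A $ i $ j = cnj (A $ j $ i))"

definition op_norm :: "complex^'n::finite^'n \<Rightarrow> real" where
  "op_norm A = onorm (\<lambda>x. A *v x)"

end

theory Submission
  imports Defs "HOL-Analysis.Analysis"
begin

lemma poly_case:
  fixes d P N :: real
  assumes d3: "d \<ge> 3" and P2: "P > 2" and Pd: "P \<le> 2*(d-1)" and N0: "N \<ge> 0" and NP: "N \<le> P"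
    and PN: "P + N \<le> 2*d" and lt: "(d+1)*(P-N) < 2*d"
  shows "2*d^2*N - 2*d*P + (d+1)*P^2 - 2*(d+1)*P*N \<ge> 0"
proof -
  consider "(d+1)*P \<le> d^2" | "(d+1)*P > d^2" "P \<le> d" | "P > d" by linarith
  then show ?thesis
  proof cases
    case 1
    have e: "(d+1)*(2*d^2*N - 2*d*P + (d+1)*P^2 - 2*(d+1)*P*N)
       = 2*((d+1)*N - ((d+1)*P - 2*d))*(d^2 - (d+1)*P) + ((d+1)*P - 2*d)*(2*d^2 - (d+1)*P)"
      by (simp add: algebra_simps power2_eq_square)
    have a: "(d+1)*N - ((d+1)*P - 2*d) \<ge> 0" using lt by (simp add: algebra_simps)
    have b: "d^2 - (d+1)*P \<ge> 0" using 1 by simp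
    have "(d+1)*P \<ge> (d+1)*2" using P2 d3 by (intro mult_left_mono) auto
    then have c: "(d+1)*P - 2*d \<ge> 0" by simp
    have dd: "2*d^2 - (d+1)*P \<ge> 0" using 1 d3 by (smt (verit) zero_le_power2)
    have "(d+1)*(2*d^2*N - 2*d*P + (d+1)*P^2 - 2*(d+1)*P*N) \<ge> 0"
      unfolding e using a b c dd by (intro add_nonneg_nonneg mult_nonneg_nonneg) auto
    then show ?thesis using d3 by (simp add: zero_le_mult_iff)
  next
    case 2
    have e: "2*d^2*N - 2*d*P + (d+1)*P^2 - 2*(d+1)*P*N
       = 2*(P - N)*((d+1)*P - d^2) + P*(2*d^2 - 2*d - (d+1)*P)"
      by (simp add: algebra_simps power2_eq_square)
    have "2*d^2 - 2*d - (d+1)*P \<ge> 2*d^2 - 2*d - (d+1)*d" using 2 d3 by (intro diff_left_mono mult_left_mono) auto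
    moreover have "2*d^2 - 2*d - (d+1)*d = d*(d-3)" by (simp add: algebra_simps power2_eq_square)
    moreover have "d*(d-3) \<ge> 0" using d3 by simp
    ultimately have x: "2*d^2 - 2*d - (d+1)*P \<ge> 0" by linarith
    show ?thesis unfolding e using x 2 NP P2 by (intro add_nonneg_nonneg mult_nonneg_nonneg) auto
  next
    case 3
    have e: "2*d^2*N - 2*d*P + (d+1)*P^2 - 2*(d+1)*P*N
       = 2*(2*d - P - N)*((d+1)*P - d^2) + 3*(d+1)*(P-d)^2 + d^2*(d-3)"
      by (simp add: algebra_simps power2_eq_square)
    have "(d+1)*P \<ge> (d+1)*d" using 3 d3 by (intro mult_left_mono) auto
    then have "(d+1)*P - d^2 \<ge> 0" using d3 by (simp add: algebra_simps power2_eq_square)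
    then show ?thesis unfolding e using PN d3 by (intro add_nonneg_nonneg mult_nonneg_nonneg) auto
  qed
qed



lemma delta_main_aux:
  fixes \<delta> :: "'n::finite \<Rightarrow> real"
  assumes b: "\<And>i. \<bar>\<delta> i\<bar> \<le> 2" and d3: "real CARD('n) \<ge> 3"
    and NP: "(\<Sum>i\<in>UNIV. max 0 (-\<delta> i)) \<le> (\<Sum>i\<in>UNIV. max 0 (\<delta> i))"
  shows "(\<Sum>i\<in>UNIV. \<bar>(real CARD('n)+1) * (\<Sum>j\<in>UNIV. \<delta> j) - real CARD('n) * \<delta> i\<bar>)
     \<le> (real CARD('n))^2 * ((\<Sum>i\<in>UNIV. max 0 (\<delta> i)) + (\<Sum>i\<in>UNIV. max 0 (-\<delta> i)))
        - (real CARD('n)+1) * (\<Sum>i\<in>UNIV. max 0 (\<delta> i)) * (\<Sum>i\<in>UNIV. max 0 (-\<delta> i))"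
proof -
  define d where "d = real CARD('n)"
  define Pp where "Pp i = max 0 (\<delta> i)" for i
  define Nn where "Nn i = max 0 (- \<delta> i)" for i
  define P where "P = (\<Sum>i\<in>UNIV. Pp i)"
  define N where "N = (\<Sum>i\<in>UNIV. Nn i)"
  have d3': "d \<ge> 3" using d3 d_def by simp
  have dsq: "d^2 \<ge> 3*d" unfolding power2_eq_square using d3' by (intro mult_right_mono) auto
  have NP': "N \<le> P" using NP unfolding N_def P_def Pp_def Nn_def .
  have dl: "\<delta> i = Pp i - Nn i" for i unfolding Pp_def Nn_def by auto
  have Pp0: "Pp i \<ge> 0" and Nn0: "Nn i \<ge> 0" for i unfolding Pp_def Nn_def by auto
  have Pp2: "Pp i \<le> 2" and Nn2: "Nn i \<le> 2" for i using b[of i] unfolding Pp_def Nn_def by auto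
  have PpN: "Pp i = 0 \<or> Nn i = 0" for i unfolding Pp_def Nn_def by auto
  have PpP: "Pp i \<le> P" for i unfolding P_def by (rule member_le_sum) (auto simp: Pp0)
  have NnN: "Nn i \<le> N" for i unfolding N_def by (rule member_le_sum) (auto simp: Nn0)
  have N0: "N \<ge> 0" unfolding N_def by (rule sum_nonneg) (simp add: Nn0)
  have sumd: "(\<Sum>j\<in>UNIV. \<delta> j) = P - N" unfolding P_def N_def dl by (simp add: sum_subtractf)
  have cardd: "(\<Sum>i\<in>(UNIV::'n set). (c::real)) = d * c" for c by (simp add: d_def)
  define Pi where "Pi i = (d+1)*P - d * Pp i" for i
  define Ni where "Ni i = (d+1)*N - d * Nn i" for i
  have absid: "\<bar>(d+1) * (\<Sum>j\<in>UNIV. \<delta> j) - d * \<delta> i\<bar> = Pi i + Ni i - 2 * min (Pi i) (Ni i)" for i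
  proof -
    have "(d+1) * (\<Sum>j\<in>UNIV. \<delta> j) - d * \<delta> i = Pi i - Ni i"
    proof -
      have e1: "d * \<delta> i = d * Pp i - d * Nn i" using dl[of i] by (simp add: right_diff_distrib)
      show ?thesis unfolding sumd Pi_def Ni_def e1 by (simp add: algebra_simps)
    qed
    then show ?thesis by (simp add: min_def abs_if)
  qed
  have sumPN: "(\<Sum>i\<in>UNIV. Pi i + Ni i) = d^2 * (P + N)"
  proof -
    have "(\<Sum>i\<in>UNIV. Pi i + Ni i) = (\<Sum>i\<in>UNIV. ((d+1)*P + (d+1)*N) - d*(Pp i + Nn i))"
      by (simp add: Pi_def Ni_def algebra_simps)
    also have "\<dots> = d*((d+1)*P + (d+1)*N) - d*(P+N)"
      by (simp only: sum_subtractf cardd sum_distrib_left[symmetric] sum.distrib P_def N_def; simp add: algebra_simps)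
    also have "\<dots> = d^2 * (P + N)" by (simp add: algebra_simps power2_eq_square)
    finally show ?thesis .
  qed
  have key: "\<exists>c\<ge>0. (\<forall>i. min (Pi i) (Ni i) \<ge> (d+1)*N - d * Nn i - c * Pp i) \<and> (d+1)*P*N \<le> 2*d^2*N - 2*c*P"
  proof (cases "P \<le> 2")
    case True
    show ?thesis
    proof (cases "P = 0")
      case True
      then have "N = 0" using NP' N0 by simp
      have "Pp i = 0" "Nn i = 0" for i using PpP[of i] NnN[of i] Pp0[of i] Nn0[of i] \<open>P = 0\<close> \<open>N = 0\<close> by auto
      then show ?thesis using \<open>P = 0\<close> \<open>N = 0\<close> by (intro exI[of _ 0]) (simp add: Pi_def Ni_def)
    next
      case False
      then have Ppos: "P > 0" using PpP[of undefined] Pp0[of undefined] by linarith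
      define c where "c = max 0 ((d+1)*N - P) / P"
      have c0: "c \<ge> 0" unfolding c_def using Ppos by simp
      have cP: "c * P = max 0 ((d+1)*N - P)" unfolding c_def using Ppos by simp
      have per: "min (Pi i) (Ni i) \<ge> (d+1)*N - d * Nn i - c * Pp i" for i
      proof (cases "Pp i = 0")
        case True
        have "Pi i \<ge> Ni i"
        proof -
          have "(d+1)*N \<le> (d+1)*P" using NP' d3' by (intro mult_left_mono) auto
          moreover have "d * Nn i \<ge> 0" using d3' Nn0[of i] by simp
          ultimately show ?thesis unfolding Pi_def Ni_def True by simp
        qed
        then show ?thesis unfolding True by (simp add: Ni_def)
      next
        case False
        then have Nz: "Nn i = 0" using PpN by auto
        have Ppp: "Pp i > 0" using False Pp0[of i] by simp
        show ?thesis
        proof (cases "(d+1)*N \<le> (d+1)*P - d * Pp i")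
          case True
          then show ?thesis unfolding Pi_def Ni_def Nz using c0 Ppp by (simp add: min_def)
        next
          case False
          have "d * Pp i \<le> d * P" using PpP[of i] d3' by (intro mult_left_mono) auto
          then have "(d+1)*N - P > 0" using False by (simp add: algebra_simps)
          then have cv: "c * P = (d+1)*N - P" using cP by simp
          have "P * ((d+1)*P - d * Pp i - ((d+1)*N - c * Pp i))
              = (d+1)*P*P - d*P*Pp i - (d+1)*N*P + (c*P)*Pp i" by (simp add: algebra_simps)
          also have "\<dots> = (d+1)*(P - N)*(P - Pp i)" unfolding cv by (simp add: algebra_simps)
          finally have "P * ((d+1)*P - d * Pp i - ((d+1)*N - c * Pp i)) = (d+1)*(P - N)*(P - Pp i)" .
          moreover have "(d+1)*(P - N)*(P - Pp i) \<ge> 0" using NP' PpP[of i] d3' by simp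
          ultimately have "P * ((d+1)*P - d * Pp i - ((d+1)*N - c * Pp i)) \<ge> 0" by linarith
          then have "(d+1)*P - d * Pp i - ((d+1)*N - c * Pp i) \<ge> 0"
            using Ppos by (simp add: zero_le_mult_iff)
          then show ?thesis unfolding Pi_def Ni_def Nz using c0 Pp0[of i] by (simp add: min_def)
        qed
      qed
      have glob: "(d+1)*P*N \<le> 2*d^2*N - 2*c*P"
      proof (cases "(d+1)*N \<le> P")
        case True
        then have "c * P = 0" using cP by simp
        have "(d+1)*P \<le> (d+1)*2" using \<open>P \<le> 2\<close> d3' by (intro mult_left_mono) auto
        also have "\<dots> \<le> 2*d^2" using d3' using dsq by simp
        finally have "(d+1)*P*N \<le> 2*d^2*N" using N0 by (intro mult_right_mono) auto
        moreover have "2*c*P = 0" using \<open>c*P = 0\<close> by simp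
        ultimately show ?thesis by linarith
      next
        case False
        then have cv: "c * P = (d+1)*N - P" using cP by simp
        have "(d+1)*P*N \<le> (d+1)*2*N" using \<open>P \<le> 2\<close> d3' N0 by (intro mult_right_mono mult_left_mono) auto
        moreover have "2*N*(d^2 - 2*d - 2) \<ge> 0" using N0 d3'
          using dsq by (intro mult_nonneg_nonneg) auto
        ultimately show ?thesis using cv Ppos by (simp add: algebra_simps power2_eq_square) 
      qed
      show ?thesis using c0 per glob by blast
    qed
  next
    case False
    then have P2: "P > 2" by simp
    define c where "c = max 0 (2*d - (d+1)*(P-N)) / 2"
    have c0: "c \<ge> 0" unfolding c_def by simp
    have per: "min (Pi i) (Ni i) \<ge> (d+1)*N - d * Nn i - c * Pp i" for i
    proof (cases "Pp i = 0")
      case True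
      have "Pi i \<ge> Ni i"
      proof -
        have "(d+1)*N \<le> (d+1)*P" using NP' d3' by (intro mult_left_mono) auto
        moreover have "d * Nn i \<ge> 0" using d3' Nn0[of i] by simp
        ultimately show ?thesis unfolding Pi_def Ni_def True by simp
      qed
      then show ?thesis unfolding True by (simp add: Ni_def)
    next
      case False
      then have Nz: "Nn i = 0" using PpN by auto
      have Ppp: "Pp i > 0" using False Pp0[of i] by simp
      show ?thesis
      proof (cases "(d+1)*N \<le> (d+1)*P - d * Pp i")
        case True
        then show ?thesis unfolding Pi_def Ni_def Nz using c0 Ppp by (simp add: min_def)
      next
        case False
        show ?thesis
        proof (cases "2*d - (d+1)*(P-N) \<le> 0")
          case True
          have "d * Pp i \<le> d * 2" using Pp2[of i] d3' by (intro mult_left_mono) auto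
          then have "(d+1)*N \<le> (d+1)*P - d * Pp i" using True by (simp add: algebra_simps)
          then show ?thesis using False by simp
        next
          case False
          then have cv: "c = (2*d - (d+1)*(P-N)) / 2" unfolding c_def by simp
          have "(d+1)*P - d * Pp i - ((d+1)*N - c * Pp i) = (d+1)*(P-N)*(1 - Pp i/2)"
            unfolding cv by (simp add: field_simps)
          moreover have "(d+1)*(P-N)*(1 - Pp i/2) \<ge> 0" using NP' Pp2[of i] d3' by simp
          ultimately show ?thesis unfolding Pi_def Ni_def Nz using c0 Pp0[of i] by (simp add: min_def)
        qed
      qed
    qed
    have glob: "(d+1)*P*N \<le> 2*d^2*N - 2*c*P"
    proof (cases "N = 0")
      case True
      have "(d+1)*P \<ge> (d+1)*2" using P2 d3' by (intro mult_left_mono) auto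
      then have "2*d - (d+1)*(P-N) \<le> 0" unfolding True by simp
      then have "c = 0" unfolding c_def by simp
      then show ?thesis using True by simp
    next
      case False
      then have "N > 0" using N0 by simp
      have "\<exists>k. Nn k > 0"
      proof (rule ccontr)
        assume "\<not> (\<exists>k. Nn k > 0)"
        then have "Nn k = 0" for k using Nn0[of k] by (simp add: not_less) (meson antisym)
        then have "N = 0" unfolding N_def by simp
        then show False using \<open>N > 0\<close> by simp
      qed
      then obtain k where k: "Nn k > 0" by blast
      then have Ppk: "Pp k = 0" using PpN[of k] by auto
      have "P = Pp k + (\<Sum>i\<in>UNIV-{k}. Pp i)" unfolding P_def by (simp add: sum.remove)
      also have "\<dots> \<le> 0 + (\<Sum>i\<in>UNIV-{k}. 2)" using Ppk by (intro add_mono sum_mono) (auto simp: Pp2)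
      also have "\<dots> = 2*(d-1)" by (simp add: d_def card_Diff_singleton_if of_nat_diff)
      finally have Pd: "P \<le> 2*(d-1)" .
      have "P + N = (\<Sum>i\<in>UNIV. \<bar>\<delta> i\<bar>)" unfolding P_def N_def dl sum.distrib[symmetric]
        by (rule sum.cong) (simp, metis PpN Pp0 Nn0 abs_of_nonneg abs_of_nonpos add.right_neutral add_0 diff_0 diff_zero abs_minus_cancel)
      also have "\<dots> \<le> (\<Sum>i\<in>(UNIV::'n set). 2)" by (rule sum_mono) (rule b)
      finally have PN: "P + N \<le> 2*d" by (simp add: d_def)
      show ?thesis
      proof (cases "2*d - (d+1)*(P-N) \<le> 0")
        case True
        then have "c = 0" unfolding c_def by simp
        have "(d+1)*P \<le> (d+1)*(2*(d-1))" using Pd d3' by (intro mult_left_mono) auto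
        also have "\<dots> \<le> 2*d^2" by (simp add: algebra_simps power2_eq_square d_def)
        finally have "(d+1)*P*N \<le> 2*d^2*N" using N0 by (intro mult_right_mono) auto
        then show ?thesis using \<open>c = 0\<close> by simp
      next
        case False
        then have cv: "c = (2*d - (d+1)*(P-N)) / 2" unfolding c_def by simp
        have "2*d^2*N - 2*d*P + (d+1)*P^2 - 2*(d+1)*P*N \<ge> 0"
          using poly_case[OF d3' P2 Pd N0 NP' PN] False by simp
        then have f: "2*d^2*N - 2*d*P + (d+1)*P^2 - 2*((d+1)*P*N) \<ge> 0" by (simp add: algebra_simps)
        have e: "2*c*P = 2*d*P - (d+1)*P^2 + (d+1)*P*N" unfolding cv by (simp add: field_simps power2_eq_square)
        show ?thesis using f e by linarith
      qed
    qed
    show ?thesis using c0 per glob by blast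
  qed
  then obtain c where c0: "c \<ge> 0" and per: "\<And>i. min (Pi i) (Ni i) \<ge> (d+1)*N - d * Nn i - c * Pp i"
    and glob: "(d+1)*P*N \<le> 2*d^2*N - 2*c*P" by blast
  have "(\<Sum>i\<in>UNIV. (d+1)*N - d * Nn i - c * Pp i) \<le> (\<Sum>i\<in>UNIV. min (Pi i) (Ni i))"
    by (rule sum_mono) (rule per)
  moreover have "(\<Sum>i\<in>UNIV. (d+1)*N - d * Nn i - c * Pp i) = d^2*N - c*P"
  proof -
    have "(\<Sum>i\<in>UNIV. (d+1)*N - d * Nn i - c * Pp i) = d*((d+1)*N) - d*N - c*P"
      by (simp only: sum_subtractf cardd sum_distrib_left[symmetric] P_def N_def; simp add: algebra_simps)
    also have "\<dots> = d^2*N - c*P" by (simp add: algebra_simps power2_eq_square)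
    finally show ?thesis .
  qed
  ultimately have smin: "(\<Sum>i\<in>UNIV. min (Pi i) (Ni i)) \<ge> d^2*N - c*P" by simp
  have "(\<Sum>i\<in>UNIV. \<bar>(d+1) * (\<Sum>j\<in>UNIV. \<delta> j) - d * \<delta> i\<bar>) = (\<Sum>i\<in>UNIV. Pi i + Ni i) - 2 * (\<Sum>i\<in>UNIV. min (Pi i) (Ni i))"
    unfolding absid by (simp add: sum_subtractf sum_distrib_left)
  also have "\<dots> \<le> d^2 * (P + N) - (d+1)*P*N" using sumPN smin glob by simp
  finally show ?thesis unfolding d_def P_def N_def Pp_def Nn_def .
qed

lemma delta_main:
  fixes \<delta> :: "'n::finite \<Rightarrow> real"
  assumes b: "\<And>i. \<bar>\<delta> i\<bar> \<le> 2" and d3: "real CARD('n) \<ge> 3"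
  shows "(\<Sum>i\<in>UNIV. \<bar>(real CARD('n)+1) * (\<Sum>j\<in>UNIV. \<delta> j) - real CARD('n) * \<delta> i\<bar>)
     \<le> (real CARD('n))^2 * ((\<Sum>i\<in>UNIV. max 0 (\<delta> i)) + (\<Sum>i\<in>UNIV. max 0 (-\<delta> i)))
        - (real CARD('n)+1) * (\<Sum>i\<in>UNIV. max 0 (\<delta> i)) * (\<Sum>i\<in>UNIV. max 0 (-\<delta> i))"
proof (cases "(\<Sum>i\<in>UNIV. max 0 (-\<delta> i)) \<le> (\<Sum>i\<in>UNIV. max 0 (\<delta> i))")
  case True
  then show ?thesis by (rule delta_main_aux[where \<delta>=\<delta>, OF b d3])
next
  case False
  have b': "\<bar>(- \<delta>) i\<bar> \<le> 2" for i using b[of i] by simp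
  have "(\<Sum>i\<in>UNIV. max 0 (-((-\<delta>) i))) \<le> (\<Sum>i\<in>UNIV. max 0 ((-\<delta>) i))" using False by simp
  from delta_main_aux[OF b' d3 this]
  have "(\<Sum>i\<in>UNIV. \<bar>(real CARD('n)+1) * (\<Sum>j\<in>UNIV. (-\<delta>) j) - real CARD('n) * (-\<delta>) i\<bar>)
     \<le> (real CARD('n))^2 * ((\<Sum>i\<in>UNIV. max 0 ((-\<delta>) i)) + (\<Sum>i\<in>UNIV. max 0 (-((-\<delta>) i))))
        - (real CARD('n)+1) * (\<Sum>i\<in>UNIV. max 0 ((-\<delta>) i)) * (\<Sum>i\<in>UNIV. max 0 (-((-\<delta>) i)))" .
  moreover have "(\<Sum>i\<in>UNIV. \<bar>(real CARD('n)+1) * (\<Sum>j\<in>UNIV. (-\<delta>) j) - real CARD('n) * (-\<delta>) i\<bar>)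
      = (\<Sum>i\<in>UNIV. \<bar>(real CARD('n)+1) * (\<Sum>j\<in>UNIV. \<delta> j) - real CARD('n) * \<delta> i\<bar>)"
    by (rule sum.cong) (auto simp: sum_negf abs_minus_commute)
  ultimately show ?thesis by (simp add: algebra_simps)
qed

lemma g_lemma:
  fixes s w :: "'n::finite \<Rightarrow> real" and d :: real
  assumes sw: "\<And>i. \<bar>s i\<bar> \<le> w i" and d0: "d \<ge> 0"
  shows "(d+1)*(\<Sum>i\<in>UNIV. s i)^2 - d*(\<Sum>i\<in>UNIV. (s i)^2) \<le> (d+1)*(\<Sum>i\<in>UNIV. w i)^2 - d*(\<Sum>i\<in>UNIV. (w i)^2)"
proof -
  define t where "t i = \<bar>s i\<bar>" for i
  define T where "T = (\<Sum>i\<in>UNIV. t i)"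
  define W where "W = (\<Sum>i\<in>UNIV. w i)"
  have t0: "t i \<ge> 0" for i unfolding t_def by simp
  have w0: "w i \<ge> 0" for i using sw[of i] by simp
  have tw: "t i \<le> w i" for i unfolding t_def using sw by simp
  have tT: "t i \<le> T" for i unfolding T_def by (rule member_le_sum) (auto simp: t0)
  have wW: "w i \<le> W" for i unfolding W_def by (rule member_le_sum) (auto simp: w0)
  have TW: "T \<le> W" unfolding T_def W_def by (rule sum_mono) (rule tw)
  have T0: "T \<ge> 0" unfolding T_def by (rule sum_nonneg) (simp add: t0)
  have ST: "(\<Sum>i\<in>UNIV. s i)^2 \<le> T^2"
  proof -
    have "\<bar>\<Sum>i\<in>UNIV. s i\<bar> \<le> T" unfolding T_def t_def by (rule sum_abs)
    then show ?thesis by (metis abs_ge_zero power2_abs power_mono)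
  qed
  have ss: "(s i)^2 = (t i)^2" for i unfolding t_def by simp
  have "(\<Sum>i\<in>UNIV. (w i)^2 - (t i)^2) \<le> (\<Sum>i\<in>UNIV. (w i - t i) * (W + T))"
  proof (rule sum_mono)
    fix i
    have "(w i)^2 - (t i)^2 = (w i - t i) * (w i + t i)" by (simp add: algebra_simps power2_eq_square)
    also have "\<dots> \<le> (w i - t i) * (W + T)" using tw[of i] wW[of i] tT[of i]
      by (intro mult_left_mono) auto
    finally show "(w i)^2 - (t i)^2 \<le> (w i - t i) * (W + T)" .
  qed
  also have "\<dots> = (W - T) * (W + T)" by (simp only: sum_distrib_right[symmetric] sum_subtractf W_def T_def)
  finally have A: "(\<Sum>i\<in>UNIV. (w i)^2) - (\<Sum>i\<in>UNIV. (t i)^2) \<le> (W - T) * (W + T)"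
    by (simp add: sum_subtractf)
  have B: "(W - T) * (W + T) \<ge> 0" using TW T0 by simp
  have "d * ((\<Sum>i\<in>UNIV. (w i)^2) - (\<Sum>i\<in>UNIV. (t i)^2)) \<le> d * ((W - T) * (W + T))"
    by (rule mult_left_mono[OF A d0])
  also have "\<dots> \<le> (d+1) * ((W - T) * (W + T))" using B by (simp add: algebra_simps)
  finally have C: "d * ((\<Sum>i\<in>UNIV. (w i)^2) - (\<Sum>i\<in>UNIV. (t i)^2)) \<le> (d+1) * ((W - T) * (W + T))" .
  have "(d+1)*(\<Sum>i\<in>UNIV. s i)^2 \<le> (d+1)*T^2" using ST d0 by (intro mult_left_mono) auto
  then show ?thesis using C unfolding ss W_def[symmetric]
    by (simp add: algebra_simps power2_eq_square)
qed

lemma classical: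
  fixes a y z :: "'n::finite \<Rightarrow> real"
  assumes a1: "\<And>i. \<bar>a i\<bar> \<le> 1" and y1: "\<And>i. \<bar>y i\<bar> \<le> 1" and z1: "\<And>i. \<bar>z i\<bar> \<le> 1"
    and d3: "real CARD('n) \<ge> 3"
  shows "\<bar>(real CARD('n)+1)*(\<Sum>i\<in>UNIV. a i)*((\<Sum>i\<in>UNIV. y i) - (\<Sum>i\<in>UNIV. z i))
           - real CARD('n)*(\<Sum>i\<in>UNIV. a i*(y i - z i))\<bar>
         \<le> (real CARD('n))^3 - (real CARD('n)+1)*(\<Sum>i\<in>UNIV. y i)*(\<Sum>i\<in>UNIV. z i)
           + real CARD('n)*(\<Sum>i\<in>UNIV. y i * z i)"
proof -
  define d where "d = real CARD('n)"
  have d3': "d \<ge> 3" using d3 d_def by simp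
  define \<delta> where "\<delta> i = y i - z i" for i
  define s where "s i = y i + z i" for i
  define w where "w i = 2 - \<bar>\<delta> i\<bar>" for i
  define P where "P = (\<Sum>i\<in>UNIV. max 0 (\<delta> i))"
  define N where "N = (\<Sum>i\<in>UNIV. max 0 (-\<delta> i))"
  define L where "L = (\<Sum>i\<in>UNIV. \<bar>\<delta> i\<bar>)"
  define Dl where "Dl = (\<Sum>i\<in>UNIV. \<delta> i)"
  have cardd: "(\<Sum>i\<in>(UNIV::'n set). (c::real)) = d * c" for c by (simp add: d_def)
  have b: "\<bar>\<delta> i\<bar> \<le> 2" for i unfolding \<delta>_def using y1[of i] z1[of i] by simp
  have sw: "\<bar>s i\<bar> \<le> w i" for i unfolding s_def w_def \<delta>_def using y1[of i] z1[of i] by (auto simp add: abs_if split: if_splits)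
  have LPN: "L = P + N" unfolding L_def P_def N_def sum.distrib[symmetric]
    by (rule sum.cong) (auto simp: abs_if)
  have DPN: "Dl = P - N" unfolding Dl_def P_def N_def sum_subtractf[symmetric]
    by (rule sum.cong) (auto simp: max_def)
  have DY: "Dl = (\<Sum>i\<in>UNIV. y i) - (\<Sum>i\<in>UNIV. z i)" unfolding Dl_def \<delta>_def by (simp add: sum_subtractf)
  have "(d+1)*(\<Sum>i\<in>UNIV. a i)*((\<Sum>i\<in>UNIV. y i) - (\<Sum>i\<in>UNIV. z i)) - d*(\<Sum>i\<in>UNIV. a i*(y i - z i))
      = (\<Sum>i\<in>UNIV. a i * ((d+1)*Dl - d*\<delta> i))"
  proof -
    have "(\<Sum>i\<in>UNIV. a i * ((d+1)*Dl - d*\<delta> i)) = (\<Sum>i\<in>UNIV. ((d+1)*Dl) * a i - d * (a i * (y i - z i)))"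
      by (rule sum.cong) (simp_all add: algebra_simps \<delta>_def)
    also have "\<dots> = (d+1)*Dl*(\<Sum>i\<in>UNIV. a i) - d*(\<Sum>i\<in>UNIV. a i*(y i - z i))"
      by (simp add: sum_subtractf sum_distrib_left)
    finally show ?thesis unfolding DY by (simp add: algebra_simps)
  qed
  also have "\<bar>\<dots>\<bar> \<le> (\<Sum>i\<in>UNIV. \<bar>a i * ((d+1)*Dl - d*\<delta> i)\<bar>)" by (rule sum_abs)
  also have "\<dots> \<le> (\<Sum>i\<in>UNIV. \<bar>(d+1)*Dl - d*\<delta> i\<bar>)"
  proof (rule sum_mono)
    fix i
    have "\<bar>a i * ((d+1)*Dl - d*\<delta> i)\<bar> = \<bar>a i\<bar> * \<bar>(d+1)*Dl - d*\<delta> i\<bar>" by (simp add: abs_mult)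
    also have "\<dots> \<le> 1 * \<bar>(d+1)*Dl - d*\<delta> i\<bar>" using a1[of i] by (intro mult_right_mono) auto
    finally show "\<bar>a i * ((d+1)*Dl - d*\<delta> i)\<bar> \<le> \<bar>(d+1)*Dl - d*\<delta> i\<bar>" by simp
  qed
  also have "\<dots> \<le> d^2 * (P + N) - (d+1)*P*N"
    using delta_main[OF b d3] unfolding d_def P_def N_def Dl_def .
  finally have lhs: "\<bar>(d+1)*(\<Sum>i\<in>UNIV. a i)*((\<Sum>i\<in>UNIV. y i) - (\<Sum>i\<in>UNIV. z i)) - d*(\<Sum>i\<in>UNIV. a i*(y i - z i))\<bar>
       \<le> d^2 * (P + N) - (d+1)*P*N" .
  have g: "(d+1)*(\<Sum>i\<in>UNIV. s i)^2 - d*(\<Sum>i\<in>UNIV. (s i)^2) \<le> (d+1)*(\<Sum>i\<in>UNIV. w i)^2 - d*(\<Sum>i\<in>UNIV. (w i)^2)"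
    by (rule g_lemma[where s=s and w=w]) (use sw d3' in auto)
  have W: "(\<Sum>i\<in>UNIV. w i) = 2*d - L" unfolding w_def L_def by (simp add: sum_subtractf d_def)
  have W2: "(\<Sum>i\<in>UNIV. (w i)^2) - (\<Sum>i\<in>UNIV. (\<delta> i)^2) = 4*d - 4*L"
  proof -
    have "(\<Sum>i\<in>UNIV. (w i)^2) - (\<Sum>i\<in>UNIV. (\<delta> i)^2) = (\<Sum>i\<in>UNIV. 4 - 4*\<bar>\<delta> i\<bar>)"
      unfolding sum_subtractf[symmetric] w_def
      by (rule sum.cong) (auto simp: power2_eq_square algebra_simps abs_mult_self_eq)
    also have "\<dots> = 4*d - 4*L" unfolding L_def by (simp add: sum_subtractf d_def sum_distrib_left)
    finally show ?thesis .
  qed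
  have YZ: "4*((\<Sum>i\<in>UNIV. y i)*(\<Sum>i\<in>UNIV. z i)) = (\<Sum>i\<in>UNIV. s i)^2 - Dl^2"
    unfolding DY s_def by (simp add: sum.distrib power2_eq_square algebra_simps)
  have yz: "4*(\<Sum>i\<in>UNIV. y i * z i) = (\<Sum>i\<in>UNIV. (s i)^2) - (\<Sum>i\<in>UNIV. (\<delta> i)^2)"
    unfolding sum_subtractf[symmetric] sum_distrib_left s_def \<delta>_def
    by (rule sum.cong) (auto simp: power2_eq_square algebra_simps)
  have "4*(d^3 - (d+1)*(\<Sum>i\<in>UNIV. y i)*(\<Sum>i\<in>UNIV. z i) + d*(\<Sum>i\<in>UNIV. y i * z i))
      = 4*d^3 - (d+1)*(4*((\<Sum>i\<in>UNIV. y i)*(\<Sum>i\<in>UNIV. z i))) + d*(4*(\<Sum>i\<in>UNIV. y i * z i))"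
    by (simp add: algebra_simps)
  also have "\<dots> = 4*d^3 + (d+1)*Dl^2 - d*(\<Sum>i\<in>UNIV. (\<delta> i)^2)
       - ((d+1)*(\<Sum>i\<in>UNIV. s i)^2 - d*(\<Sum>i\<in>UNIV. (s i)^2))"
    unfolding YZ yz by (simp add: algebra_simps)
  also have "\<dots> \<ge> 4*d^3 + (d+1)*Dl^2 - d*(\<Sum>i\<in>UNIV. (\<delta> i)^2)
       - ((d+1)*(\<Sum>i\<in>UNIV. w i)^2 - d*(\<Sum>i\<in>UNIV. (w i)^2))" using g by linarith
  finally have R1: "4*(d^3 - (d+1)*(\<Sum>i\<in>UNIV. y i)*(\<Sum>i\<in>UNIV. z i) + d*(\<Sum>i\<in>UNIV. y i * z i))
     \<ge> 4*d^3 + (d+1)*Dl^2 - (d+1)*(2*d - L)^2 + d*(4*d - 4*L)"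
    unfolding W W2[symmetric] by (simp add: algebra_simps)
  have E: "4*d^3 + (d+1)*Dl^2 - (d+1)*(2*d - L)^2 + d*(4*d - 4*L) = 4*(d^2 * (P + N) - (d+1)*P*N)"
    unfolding LPN DPN by (simp add: algebra_simps power2_eq_square power3_eq_cube)
  have "4*(d^2 * (P + N) - (d+1)*P*N) \<le> 4*(d^3 - (d+1)*(\<Sum>i\<in>UNIV. y i)*(\<Sum>i\<in>UNIV. z i) + d*(\<Sum>i\<in>UNIV. y i * z i))"
    by (subst E[symmetric]) (rule R1)
  then have rhs: "d^2 * (P + N) - (d+1)*P*N \<le> d^3 - (d+1)*(\<Sum>i\<in>UNIV. y i)*(\<Sum>i\<in>UNIV. z i) + d*(\<Sum>i\<in>UNIV. y i * z i)"
    by simp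
  show ?thesis using lhs rhs unfolding d_def by linarith
qed

lemma werner_entry:
  "(werner :: complex^('n::finite \<times> 'n)^('n \<times> 'n)) $ p $ q =
     (of_nat CARD('n) + 1) / (of_nat CARD('n))^3 * (if p = q then 1 else 0)
     - 1 / (of_nat CARD('n))^2 * (if q = (snd p, fst p) then 1 else 0)"
  unfolding werner_def Let_def flip_op_def mat_def
  by (cases p; cases q) auto

lemma trace_werner:
  fixes A B :: "complex^'n::finite^'n"
  shows "trace (werner ** kron A B) = (of_nat CARD('n) + 1) / (of_nat CARD('n))^3 * (trace A * trace B)
           - 1 / (of_nat CARD('n))^2 * trace (A ** B)"
proof -
  define c :: complex where "c = (of_nat CARD('n) + 1) / (of_nat CARD('n))^3"
  define e :: complex where "e = 1 / (of_nat CARD('n))^2"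
  define K where "K = kron A B"
  have "trace (werner ** K) = (\<Sum>p\<in>UNIV. \<Sum>q\<in>UNIV. werner$p$q * K$q$p)"
    unfolding trace_def matrix_matrix_mult_def by simp
  also have "\<dots> = (\<Sum>p\<in>UNIV. c * K$p$p - e * K$(snd p, fst p)$p)"
  proof (rule sum.cong[OF refl])
    fix p :: "'n \<times> 'n"
    have "(\<Sum>q\<in>UNIV. werner$p$q * K$q$p)
        = (\<Sum>q\<in>UNIV. c * (if p = q then K$q$p else 0) - e * (if q = (snd p, fst p) then K$q$p else 0))"
      by (rule sum.cong[OF refl]) (simp add: werner_entry c_def e_def algebra_simps)
    also have "\<dots> = c * K$p$p - e * K$(snd p, fst p)$p"
      by (simp add: sum_subtractf sum_distrib_left[symmetric])
    finally show "(\<Sum>q\<in>UNIV. werner$p$q * K$q$p) = c * K$p$p - e * K$(snd p, fst p)$p" .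
  qed
  also have "\<dots> = c * (\<Sum>p\<in>UNIV. K$p$p) - e * (\<Sum>p\<in>UNIV. K$(snd p, fst p)$p)"
    by (simp add: sum_subtractf sum_distrib_left)
  also have "(\<Sum>p\<in>UNIV. K$p$p) = trace A * trace B"
  proof -
    have "(\<Sum>p\<in>UNIV. K$p$p) = (\<Sum>(i,j)\<in>UNIV \<times> UNIV. A$i$i * B$j$j)"
      unfolding K_def kron_def UNIV_Times_UNIV by (simp add: case_prod_beta)
    also have "\<dots> = (\<Sum>i\<in>UNIV. \<Sum>j\<in>UNIV. A$i$i * B$j$j)" by (simp add: sum.cartesian_product)
    also have "\<dots> = trace A * trace B" unfolding trace_def by (simp add: sum_product)
    finally show ?thesis .
  qed
  also have "(\<Sum>p\<in>UNIV. K$(snd p, fst p)$p) = trace (A ** B)"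
  proof -
    have "(\<Sum>p\<in>UNIV. K$(snd p, fst p)$p) = (\<Sum>(i,j)\<in>UNIV \<times> UNIV. A$j$i * B$i$j)"
      unfolding K_def kron_def UNIV_Times_UNIV by (simp add: case_prod_beta)
    also have "\<dots> = (\<Sum>i\<in>UNIV. \<Sum>j\<in>UNIV. A$j$i * B$i$j)" by (simp add: sum.cartesian_product)
    also have "\<dots> = (\<Sum>j\<in>UNIV. \<Sum>i\<in>UNIV. A$j$i * B$i$j)" by (rule sum.swap)
    also have "\<dots> = trace (A ** B)" unfolding trace_def matrix_matrix_mult_def by simp
    finally show ?thesis .
  qed
  finally show ?thesis unfolding K_def c_def e_def .
qed

definition herm :: "complex^'n::finite \<Rightarrow> complex^'n \<Rightarrow> complex" where
  "herm u v = (\<Sum>i\<in>UNIV. cnj (u$i) * v$i)"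

definition adj :: "complex^'n::finite^'m::finite \<Rightarrow> complex^'m^'n" where
  "adj A = (\<chi> i j. cnj (A$j$i))"

lemma inner_herm: "u \<bullet> v = Re (herm u v)"
  unfolding herm_def inner_vec_def inner_complex_def by (simp add: Re_sum)

lemma herm_cnj: "herm v u = cnj (herm u v)"
  unfolding herm_def by (simp add: mult.commute)

lemma herm_self: "herm u u = complex_of_real (u \<bullet> u)"
proof (rule complex_eqI)
  show "Re (herm u u) = Re (complex_of_real (u \<bullet> u))" by (simp add: inner_herm)
  have "herm u u = (\<Sum>i\<in>UNIV. complex_of_real ((cmod (u$i))^2))"
    unfolding herm_def by (rule sum.cong[OF refl]) (subst complex_norm_square, simp add: mult.commute)
  then have "Im (herm u u) = 0" by (simp add: Im_sum)
  then show "Im (herm u u) = Im (complex_of_real (u \<bullet> u))" by simp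
qed

lemma herm_add_right: "herm u (v + w) = herm u v + herm u w"
  unfolding herm_def by (simp add: distrib_left sum.distrib)

lemma herm_diff_right: "herm u (v - w) = herm u v - herm u w"
  unfolding herm_def by (simp add: right_diff_distrib sum_subtractf)

lemma herm_scaleR_right: "herm u (r *\<^sub>R v) = complex_of_real r * herm u v"
proof -
  have "herm u (r *\<^sub>R v) = (\<Sum>i\<in>UNIV. complex_of_real r * (cnj (u$i) * v$i))"
    unfolding herm_def by (rule sum.cong[OF refl]) (simp only: vector_scaleR_component, simp add: scaleR_conv_of_real)
  then show ?thesis unfolding herm_def by (simp add: sum_distrib_left)
qed

lemma herm_smult_left: "herm (c *s u) v = cnj c * herm u v"
  unfolding herm_def by (simp add: sum_distrib_left algebra_simps)

lemma herm_sa: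
  assumes "self_adjoint D"
  shows "herm u (D *v v) = herm (D *v u) v"
proof -
  have "herm u (D *v v) = (\<Sum>i\<in>UNIV. \<Sum>j\<in>UNIV. cnj (u$i) * D$i$j * v$j)"
    unfolding herm_def matrix_vector_mult_def by (simp add: sum_distrib_left mult.assoc)
  also have "\<dots> = (\<Sum>j\<in>UNIV. \<Sum>i\<in>UNIV. cnj (u$i) * D$i$j * v$j)" by (rule sum.swap)
  also have "\<dots> = (\<Sum>j\<in>UNIV. (\<Sum>i\<in>UNIV. cnj (D$j$i * u$i)) * v$j)"
  proof (rule sum.cong[OF refl])
    fix j
    have pt: "cnj (u$i) * D$i$j * v$j = cnj (D$j$i * u$i) * v$j" for i
    proof -
      have e: "D$i$j = cnj (D$j$i)" using assms unfolding self_adjoint_def by blast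
      show ?thesis by (simp add: e)
    qed
    have "(\<Sum>i\<in>UNIV. cnj (u$i) * D$i$j * v$j) = (\<Sum>i\<in>UNIV. cnj (D$j$i * u$i) * v$j)"
      by (rule sum.cong[OF refl]) (rule pt)
    then show "(\<Sum>i\<in>UNIV. cnj (u$i) * D$i$j * v$j) = (\<Sum>i\<in>UNIV. cnj (D$j$i * u$i)) * v$j"
      by (simp only: sum_distrib_right)
  qed
  also have "\<dots> = herm (D *v u) v"
    unfolding herm_def matrix_vector_mult_def by (simp add: cnj_sum)
  finally show ?thesis .
qed

lemma inner_sa:
  assumes "self_adjoint D"
  shows "x \<bullet> (D *v y) = (D *v x) \<bullet> y"
  unfolding inner_herm using herm_sa[OF assms] by simp

lemma sa_linear: "linear (\<lambda>x::complex^'n::finite. D *v x)"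
  by (rule matrix_vector_mul_linear)

lemma sa_cont: "continuous_on S (\<lambda>x::complex^'n::finite. (D::complex^'n^'m::finite) *v x)"
  by (rule linear_continuous_on) (simp add: linear_conv_bounded_linear[symmetric])

lemma exists_nonzero_orth:
  fixes u :: "'n::finite \<Rightarrow> complex^'n"
  assumes "x \<notin> S"
  defines "M \<equiv> (\<chi> j. if j \<in> S then (\<chi> k. cnj (u j $ k)) else 0) :: complex^'n^'n"
  shows "\<exists>v. v \<noteq> 0 \<and> M *v v = 0"
proof (rule ccontr)
  assume "\<not> ?thesis"
  then have "\<forall>v. M *v v = 0 \<longrightarrow> v = 0" by blast
  then obtain B where "B ** M = mat 1" using matrix_left_invertible_ker by blast
  then have MB: "M ** B = mat 1" using matrix_left_right_inverse by blast
  have "(M ** B)$x$x = 0" unfolding matrix_matrix_mult_def M_def using assms(1) by simp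
  then show False using MB by (simp add: mat_def)
qed

lemma M_apply:
  fixes u :: "'n::finite \<Rightarrow> complex^'n"
  shows "((\<chi> j. if j \<in> S then (\<chi> k. cnj (u j $ k)) else 0) :: complex^'n^'n) *v v = 0
     \<longleftrightarrow> (\<forall>i\<in>S. herm (u i) v = 0)"
  unfolding matrix_vector_mult_def herm_def by (auto simp: vec_eq_iff)

lemma quad_zero:
  fixes a K :: real
  assumes "\<And>t. 2*t*a + t^2 * K \<le> 0" and "a \<ge> 0"
  shows "a = 0"
proof (rule ccontr)
  assume "a \<noteq> 0"
  then have ap: "a > 0" using assms(2) by simp
  define t where "t = a / (\<bar>K\<bar> + 1)"
  have tp: "t > 0" unfolding t_def using ap by simp
  have "2*t*a + t^2 * K \<le> 0" by (rule assms(1))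
  then have "t * (2*a + t*K) \<le> 0" by (simp add: algebra_simps power2_eq_square)
  then have "2*a + t*K \<le> 0" using tp by (simp add: mult_le_0_iff)
  moreover have "t * K \<ge> t * (- \<bar>K\<bar>)" using tp by (intro mult_left_mono) auto
  moreover have "t * \<bar>K\<bar> < a"
  proof -
    have "t * \<bar>K\<bar> = a * (\<bar>K\<bar> / (\<bar>K\<bar> + 1))" unfolding t_def by simp
    also have "\<dots> < a * 1" using ap by (intro mult_strict_left_mono) auto
    finally show ?thesis by simp
  qed
  ultimately show False using ap by linarith
qed

lemma spectral_step:
  fixes D :: "complex^'n::finite^'n" and u :: "'n \<Rightarrow> complex^'n" and lam :: "'n \<Rightarrow> real"
  assumes sa: "self_adjoint D" and xS: "x \<notin> S"
    and eig: "\<forall>i\<in>S. D *v u i = complex_of_real (lam i) *s u i"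
  shows "\<exists>v \<mu>. herm v v = 1 \<and> (\<forall>i\<in>S. herm (u i) v = 0) \<and> D *v v = complex_of_real \<mu> *s v"
proof -
  define M where "M = ((\<chi> j. if j \<in> S then (\<chi> k. cnj (u j $ k)) else 0) :: complex^'n^'n)"
  define W where "W = {v. M *v v = 0}"
  have W_iff: "v \<in> W \<longleftrightarrow> (\<forall>i\<in>S. herm (u i) v = 0)" for v unfolding W_def M_def using M_apply by blast
  obtain v0 where v0: "v0 \<noteq> 0" "M *v v0 = 0" using exists_nonzero_orth[OF xS] unfolding M_def by blast
  have Wlin: "M *v (r *\<^sub>R v) = r *\<^sub>R (M *v v)" for r v
    using linear_scale[OF sa_linear[of M]] by simp
  have Wadd: "M *v (v + w) = M *v v + M *v w" for v w by (simp add: matrix_vector_right_distrib)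
  have closedW: "closed W" unfolding W_def
    by (rule closed_Collect_eq) (auto intro: sa_cont continuous_on_const)
  define K where "K = sphere (0::complex^'n) 1 \<inter> W"
  have compK: "compact K" unfolding K_def by (rule compact_Int_closed) (auto simp: closedW)
  have "v0 /\<^sub>R norm v0 \<in> K" unfolding K_def W_def using v0 Wlin by (simp add: norm_divide)
  then have Kne: "K \<noteq> {}" by blast
  define q where "q x = x \<bullet> (D *v x)" for x
  have contq: "continuous_on K q" unfolding q_def
    by (intro continuous_intros sa_cont)
  obtain v where vK: "v \<in> K" and vmax: "\<forall>y\<in>K. q y \<le> q v"
    using continuous_attains_sup[OF compK Kne contq] by blast
  define \<mu> where "\<mu> = q v"
  have nv: "norm v = 1" and vW: "v \<in> W" using vK unfolding K_def by auto
  have vv: "v \<bullet> v = 1" using nv by (simp add: dot_square_norm)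
  have qscale: "q (r *\<^sub>R y) = r^2 * q y" for r y
    unfolding q_def using linear_scale[OF sa_linear[of D]] by (simp add: power2_eq_square)
  have qW: "q y \<le> \<mu> * (y \<bullet> y)" if "y \<in> W" for y
  proof (cases "y = 0")
    case True then show ?thesis unfolding q_def by simp
  next
    case False
    define y' where "y' = (1 / norm y) *\<^sub>R y"
    have "y' \<in> K" unfolding K_def y'_def using that False Wlin unfolding W_def by simp
    then have "q y' \<le> \<mu>" using vmax \<mu>_def by blast
    moreover have "q y' = q y / (norm y)^2" unfolding y'_def qscale by (simp add: power_divide)
    ultimately have "q y / (norm y)^2 \<le> \<mu>" by simp
    then have "q y \<le> \<mu> * (norm y)^2" using False by (simp add: divide_le_eq)
    then show ?thesis by (simp add: dot_square_norm)
  qed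
  define r where "r = D *v v - \<mu> *\<^sub>R v"
  have rW: "r \<in> W"
  proof -
    have "herm (u i) r = 0" if "i \<in> S" for i
    proof -
      have "herm (u i) (D *v v) = herm (D *v u i) v" by (rule herm_sa[OF sa])
      also have "\<dots> = cnj (complex_of_real (lam i)) * herm (u i) v" using eig that by (simp add: herm_smult_left)
      also have "herm (u i) v = 0" using vW that W_iff by blast
      finally have "herm (u i) (D *v v) = 0" by simp
      then show ?thesis unfolding r_def using vW that W_iff by (simp add: herm_diff_right herm_scaleR_right)
    qed
    then show ?thesis using W_iff by blast
  qed
  have ineq: "2*t*(r \<bullet> r) + t^2 * (q r - \<mu> * (r \<bullet> r)) \<le> 0" for t
  proof -
    have "v + t *\<^sub>R r \<in> W" using vW rW unfolding W_def by (simp add: Wadd Wlin)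
    then have A: "q (v + t *\<^sub>R r) \<le> \<mu> * ((v + t *\<^sub>R r) \<bullet> (v + t *\<^sub>R r))" by (rule qW)
    have sym: "v \<bullet> (D *v r) = r \<bullet> (D *v v)" using inner_sa[OF sa, of v r] by (simp add: inner_commute)
    have Dlin: "D *v (v + t *\<^sub>R r) = D *v v + t *\<^sub>R (D *v r)"
      using linear_scale[OF sa_linear[of D]] by (simp add: matrix_vector_right_distrib)
    have F1: "q (v + t *\<^sub>R r) = \<mu> + 2*t*(r \<bullet> (D *v v)) + t^2 * q r"
      unfolding q_def Dlin \<mu>_def using sym by (simp add: inner_add_left inner_add_right algebra_simps power2_eq_square)
    have vr: "v \<bullet> r = r \<bullet> v" by (rule inner_commute)
    have F2: "(v + t *\<^sub>R r) \<bullet> (v + t *\<^sub>R r) = 1 + 2*t*(r \<bullet> v) + t^2 * (r \<bullet> r)"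
      using vv vr by (simp add: inner_add_left inner_add_right algebra_simps power2_eq_square)
    have F3: "r \<bullet> (D *v v) = r \<bullet> r + \<mu> * (r \<bullet> v)" unfolding r_def
      by (simp add: inner_diff_right algebra_simps)
    have "\<mu> + 2*t*(r \<bullet> r + \<mu> * (r \<bullet> v)) + t^2 * q r \<le> \<mu> * (1 + 2*t*(r \<bullet> v) + t^2 * (r \<bullet> r))"
      using A unfolding F1 F2 F3 .
    then show ?thesis by (simp add: algebra_simps)
  qed
  have "r \<bullet> r = 0" by (rule quad_zero[OF ineq]) simp
  then have "r = 0" by simp
  then have "D *v v = \<mu> *\<^sub>R v" unfolding r_def by simp
  then have Dv: "D *v v = complex_of_real \<mu> *s v"
    by (simp only: vec_eq_iff vector_scaleR_component vector_smult_component) (simp add: scaleR_conv_of_real)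
  have "herm v v = 1" using vv by (simp add: herm_self)
  moreover have "\<forall>i\<in>S. herm (u i) v = 0" using vW W_iff by blast
  ultimately show ?thesis using Dv by blast
qed

lemma spectral_ind:
  fixes D :: "complex^'n::finite^'n" and S :: "'n set"
  assumes sa: "self_adjoint D" and fin: "finite S"
  shows "\<exists>u lam. (\<forall>i\<in>S. \<forall>j\<in>S. herm (u i) (u j) = (if i = j then 1 else 0))
           \<and> (\<forall>i\<in>S. D *v u i = complex_of_real (lam i) *s u i)"
  using fin
proof (induction S rule: finite_induct)
  case empty
  then show ?case by simp
next
  case (insert x S)
  then obtain u lam where orth: "\<forall>i\<in>S. \<forall>j\<in>S. herm (u i) (u j) = (if i = j then 1 else 0)"
    and eig: "\<forall>i\<in>S. D *v u i = complex_of_real (lam i) *s u i" by blast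
  obtain v \<mu> where v1: "herm v v = 1" and vo: "\<forall>i\<in>S. herm (u i) v = 0"
    and ve: "D *v v = complex_of_real \<mu> *s v"
    using spectral_step[OF sa insert(2) eig] by blast
  have vo': "\<forall>i\<in>S. herm v (u i) = 0" using vo herm_cnj by (metis complex_cnj_zero)
  define u' where "u' = u(x := v)"
  define lam' where "lam' = lam(x := \<mu>)"
  have "\<forall>i\<in>insert x S. \<forall>j\<in>insert x S. herm (u' i) (u' j) = (if i = j then 1 else 0)"
    unfolding u'_def using orth v1 vo vo' insert(2) by auto
  moreover have "\<forall>i\<in>insert x S. D *v u' i = complex_of_real (lam' i) *s u' i"
    unfolding u'_def lam'_def using eig ve insert(2) by auto
  ultimately show ?case by (intro exI[of _ u'] exI[of _ lam'] conjI)
qed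

lemma adj_mult: "adj (A ** B) = adj B ** adj A"
  unfolding adj_def matrix_matrix_mult_def by (simp add: vec_eq_iff cnj_sum mult.commute)

lemma adj_adj[simp]: "adj (adj A) = A"
  unfolding adj_def by (simp add: vec_eq_iff)

lemma self_adjoint_adj: "self_adjoint A \<longleftrightarrow> adj A = A"
proof
  assume a: "self_adjoint A"
  have "cnj (A$j$i) = A$i$j" for i j
  proof -
    have "A$i$j = cnj (A$j$i)" using a unfolding self_adjoint_def by blast
    then show ?thesis by simp
  qed
  then show "adj A = A" unfolding adj_def by (simp add: vec_eq_iff)
next
  assume a: "adj A = A"
  have "A$i$j = cnj (A$j$i)" for i j
  proof -
    have "(adj A)$i$j = A$i$j" using a by simp
    then show ?thesis unfolding adj_def by simp
  qed
  then show "self_adjoint A" unfolding self_adjoint_def by blast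
qed

lemma spectral:
  fixes D :: "complex^'n::finite^'n"
  assumes sa: "self_adjoint D"
  shows "\<exists>(U::complex^'n^'n) lam. adj U ** U = mat 1 \<and> U ** adj U = mat 1
           \<and> (\<forall>i j. (adj U ** D ** U)$i$j = (if i = j then complex_of_real (lam i) else 0))"
proof -
  obtain u :: "'n \<Rightarrow> complex^'n" and lam :: "'n \<Rightarrow> real"
    where orth: "\<forall>i j. herm (u i) (u j) = (if i = j then 1 else 0)"
    and eig: "\<forall>i. D *v u i = complex_of_real (lam i) *s u i"
    using spectral_ind[OF sa finite_class.finite_UNIV] by (simp only: ball_UNIV) blast
  define U :: "complex^'n^'n" where "U = (\<chi> i j. u j $ i)"
  have UU: "adj U ** U = mat 1"
  proof -
    have "(adj U ** U)$i$j = herm (u i) (u j)" for i j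
      unfolding U_def adj_def matrix_matrix_mult_def herm_def by simp
    then show ?thesis using orth by (simp add: vec_eq_iff mat_def)
  qed
  have UU2: "U ** adj U = mat 1" using UU matrix_left_right_inverse by blast
  have DU: "(D ** U)$k$j = complex_of_real (lam j) * u j $ k" for k j
  proof -
    have "(D ** U)$k$j = (D *v u j)$k" unfolding U_def matrix_matrix_mult_def matrix_vector_mult_def by simp
    then show ?thesis using eig by simp
  qed
  have "(adj U ** D ** U)$i$j = (if i = j then complex_of_real (lam i) else 0)" for i j
  proof -
    have "(adj U ** D ** U)$i$j = (adj U ** (D ** U))$i$j" by (simp add: matrix_mul_assoc)
    also have "\<dots> = (\<Sum>k\<in>UNIV. (adj U)$i$k * (D ** U)$k$j)"
      by (simp add: matrix_matrix_mult_def[of "adj U"])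
    also have "\<dots> = (\<Sum>k\<in>UNIV. complex_of_real (lam j) * (cnj (u i $ k) * u j $ k))"
      by (rule sum.cong[OF refl]) (simp only: DU, simp add: adj_def U_def)
    also have "\<dots> = complex_of_real (lam j) * herm (u i) (u j)"
      unfolding herm_def by (simp add: sum_distrib_left)
    also have "\<dots> = (if i = j then complex_of_real (lam i) else 0)" using orth by simp
    finally show ?thesis .
  qed
  then have "\<forall>i j. (adj U ** D ** U)$i$j = (if i = j then complex_of_real (lam i) else 0)" by blast
  then show ?thesis using UU UU2 by (intro exI[of _ U] exI[of _ lam] conjI)
qed

lemma matrix_sub_ldistrib: "(A::complex^'n::finite^'m::finite) ** (B - C) = A ** B - A ** C"
  by (simp add: matrix_matrix_mult_def vec_eq_iff right_diff_distrib sum_subtractf)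

lemma matrix_sub_rdistrib: "((B::complex^'n::finite^'m::finite) - C) ** A = B ** A - C ** A"
  by (simp add: matrix_matrix_mult_def vec_eq_iff left_diff_distrib sum_subtractf)

lemma adj_sub: "adj (A - B) = adj A - adj B"
  unfolding adj_def by (simp add: vec_eq_iff)

lemma self_adjoint_diff: "self_adjoint A \<Longrightarrow> self_adjoint B \<Longrightarrow> self_adjoint (A - B)"
  unfolding self_adjoint_adj by (simp add: adj_sub)

lemma diag_bound:
  fixes X U :: "complex^'n::finite^'n"
  assumes sa: "self_adjoint X" and nX: "op_norm X \<le> 1" and UU: "adj U ** U = mat 1"
  shows "Im ((adj U ** X ** U)$i$i) = 0" and "\<bar>Re ((adj U ** X ** U)$i$i)\<bar> \<le> 1"
proof -
  define c where "c = (\<chi> k. U$k$i)"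
  have ent: "(adj U ** X ** U)$i$i = herm c (X *v c)"
  proof -
    have "(adj U ** X ** U)$i$i = (adj U ** (X ** U))$i$i" by (simp add: matrix_mul_assoc)
    also have "\<dots> = (\<Sum>k\<in>UNIV. cnj (U$k$i) * (\<Sum>l\<in>UNIV. X$k$l * U$l$i))"
      unfolding matrix_matrix_mult_def adj_def by simp
    also have "\<dots> = herm c (X *v c)" unfolding herm_def c_def matrix_vector_mult_def by simp
    finally show ?thesis .
  qed
  have "herm c (X *v c) = herm (X *v c) c" by (rule herm_sa[OF sa])
  also have "\<dots> = cnj (herm c (X *v c))" by (rule herm_cnj)
  finally have "Im (herm c (X *v c)) = 0" by (metis cnj.simps(2) neg_equal_zero)
  then show "Im ((adj U ** X ** U)$i$i) = 0" unfolding ent .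
  have cc: "herm c c = 1"
  proof -
    have "herm c c = (adj U ** U)$i$i" unfolding herm_def c_def matrix_matrix_mult_def adj_def by simp
    then show ?thesis using UU by (simp add: mat_def)
  qed
  then have "c \<bullet> c = 1" using herm_self[of c] by simp
  then have nc: "norm c = 1" by (simp add: norm_eq_sqrt_inner)
  have bl: "bounded_linear (\<lambda>x. X *v x)" by (simp add: linear_conv_bounded_linear[symmetric])
  have "norm (X *v c) \<le> onorm (\<lambda>x. X *v x) * norm c" by (rule onorm[OF bl])
  also have "\<dots> \<le> 1" using nX nc unfolding op_norm_def by simp
  finally have nXc: "norm (X *v c) \<le> 1" .
  have "\<bar>Re (herm c (X *v c))\<bar> = \<bar>c \<bullet> (X *v c)\<bar>" by (simp add: inner_herm)
  also have "\<dots> \<le> norm c * norm (X *v c)" by (rule Cauchy_Schwarz_ineq2)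
  also have "\<dots> \<le> 1" using nc nXc by simp
  finally show "\<bar>Re ((adj U ** X ** U)$i$i)\<bar> \<le> 1" unfolding ent .
qed


theorem mainTheorem2:
  fixes Ja Jb1 Jb2 :: "complex^'n^'n"
  assumes "CARD('n) \<ge> 3"
    and "self_adjoint Ja" and "self_adjoint Jb1" and "self_adjoint Jb2"
    and "op_norm Ja \<le> 1" and "op_norm Jb1 \<le> 1" and "op_norm Jb2 \<le> 1"
  shows "cmod (trace (werner ** kron Ja Jb1) - trace (werner ** kron Ja Jb2))
           \<le> 1 - Re (trace (werner ** kron Jb1 Jb2))"
proof -
  note card3 = assms(1) and saA = assms(2) and saB1 = assms(3) and saB2 = assms(4)
    and nA = assms(5) and nB1 = assms(6) and nB2 = assms(7)
  define d where "d = real CARD('n)"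
  have d3: "d \<ge> 3" using card3 unfolding d_def by simp
  have d3': "real CARD('n) \<ge> 3" using d3 unfolding d_def .
  define D where "D = Jb1 - Jb2"
  have saD: "self_adjoint D" unfolding D_def by (rule self_adjoint_diff[OF saB1 saB2])
  obtain U :: "complex^'n^'n" and lam where UU: "adj U ** U = mat 1" and UU2: "U ** adj U = mat 1"
    and diag: "\<forall>i j. (adj U ** D ** U)$i$j = (if i = j then complex_of_real (lam i) else 0)"
    using spectral[OF saD] by blast
  define cj where "cj X = adj U ** X ** U" for X :: "complex^'n^'n"
  have UUZ: "U ** (adj U ** Z) = Z" for Z :: "complex^'n^'n"
    by (simp add: matrix_mul_assoc UU2)
  have tr_cj: "trace (cj X) = trace X" for X
  proof -
    have "trace (cj X) = trace (U ** (adj U ** X))" unfolding cj_def by (rule trace_mul_sym)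
    also have "\<dots> = trace X" by (simp add: UUZ)
    finally show ?thesis .
  qed
  have cj_mult: "cj (X ** Y) = cj X ** cj Y" for X Y
    unfolding cj_def by (simp add: matrix_mul_assoc[symmetric] UUZ)
  have cj_sub: "cj (X - Y) = cj X - cj Y" for X Y
    unfolding cj_def by (simp add: matrix_sub_ldistrib matrix_sub_rdistrib)
  have cj_sa: "self_adjoint (cj X)" if "self_adjoint X" for X
  proof -
    have "adj X = X" using that self_adjoint_adj by blast
    then have "adj (cj X) = cj X" unfolding cj_def by (simp add: adj_mult matrix_mul_assoc)
    then show ?thesis using self_adjoint_adj by blast
  qed
  define A' where "A' = cj Ja"
  define B1' where "B1' = cj Jb1"
  define B2' where "B2' = cj Jb2"
  define a where "a i = Re (A'$i$i)" for i
  define y where "y i = Re (B1'$i$i)" for i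
  define z where "z i = Re (B2'$i$i)" for i
  have Aii: "A'$i$i = complex_of_real (a i)" for i
    using diag_bound(1)[OF saA nA UU, of i] unfolding a_def A'_def cj_def by (simp add: complex_eq_iff)
  have B1ii: "B1'$i$i = complex_of_real (y i)" for i
    using diag_bound(1)[OF saB1 nB1 UU, of i] unfolding y_def B1'_def cj_def by (simp add: complex_eq_iff)
  have B2ii: "B2'$i$i = complex_of_real (z i)" for i
    using diag_bound(1)[OF saB2 nB2 UU, of i] unfolding z_def B2'_def cj_def by (simp add: complex_eq_iff)
  have a1: "\<bar>a i\<bar> \<le> 1" for i using diag_bound(2)[OF saA nA UU, of i] unfolding a_def A'_def cj_def .
  have y1: "\<bar>y i\<bar> \<le> 1" for i using diag_bound(2)[OF saB1 nB1 UU, of i] unfolding y_def B1'_def cj_def .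
  have z1: "\<bar>z i\<bar> \<le> 1" for i using diag_bound(2)[OF saB2 nB2 UU, of i] unfolding z_def B2'_def cj_def .
  have Dent: "cj D $ k $ i = (if k = i then complex_of_real (y i - z i) else 0)" for k i
  proof -
    have e1: "cj D $ k $ i = B1'$k$i - B2'$k$i" unfolding D_def cj_sub B1'_def B2'_def by simp
    show ?thesis
    proof (cases "k = i")
      case True then show ?thesis using e1 B1ii B2ii by simp
    next
      case False then show ?thesis using diag unfolding cj_def by simp
    qed
  qed
  have offd: "B2'$k$i = B1'$k$i" if "k \<noteq> i" for k i
  proof -
    have "cj D $ k $ i = B1'$k$i - B2'$k$i" unfolding D_def cj_sub B1'_def B2'_def by simp
    then show ?thesis using Dent[of k i] that by simp
  qed
  have saB1': "self_adjoint B1'" unfolding B1'_def by (rule cj_sa[OF saB1])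
  have trA: "trace Ja = complex_of_real (\<Sum>i\<in>UNIV. a i)"
    using tr_cj[of Ja] unfolding A'_def[symmetric] trace_def by (simp add: Aii)
  have trB1: "trace Jb1 = complex_of_real (\<Sum>i\<in>UNIV. y i)"
    using tr_cj[of Jb1] unfolding B1'_def[symmetric] trace_def by (simp add: B1ii)
  have trB2: "trace Jb2 = complex_of_real (\<Sum>i\<in>UNIV. z i)"
    using tr_cj[of Jb2] unfolding B2'_def[symmetric] trace_def by (simp add: B2ii)
  have trAD: "trace (Ja ** D) = complex_of_real (\<Sum>i\<in>UNIV. a i * (y i - z i))"
  proof -
    have "trace (Ja ** D) = trace (A' ** cj D)" using tr_cj[of "Ja ** D"] unfolding cj_mult A'_def by simp
    also have "\<dots> = (\<Sum>i\<in>UNIV. \<Sum>k\<in>UNIV. A'$i$k * cj D $ k $ i)"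
      unfolding trace_def matrix_matrix_mult_def by simp
    also have "\<dots> = (\<Sum>i\<in>UNIV. A'$i$i * complex_of_real (y i - z i))"
      by (rule sum.cong[OF refl]) (simp add: Dent if_distrib cong: if_cong)
    also have "\<dots> = complex_of_real (\<Sum>i\<in>UNIV. a i * (y i - z i))" by (simp add: Aii)
    finally show ?thesis .
  qed
  have trBB: "Re (trace (Jb1 ** Jb2)) \<ge> (\<Sum>i\<in>UNIV. y i * z i)"
  proof -
    have "trace (Jb1 ** Jb2) = trace (B1' ** B2')" using tr_cj[of "Jb1 ** Jb2"] unfolding cj_mult B1'_def B2'_def by simp
    also have "\<dots> = (\<Sum>i\<in>UNIV. \<Sum>k\<in>UNIV. B1'$i$k * B2'$k$i)"
      unfolding trace_def matrix_matrix_mult_def by simp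
    finally have "Re (trace (Jb1 ** Jb2)) = (\<Sum>i\<in>UNIV. \<Sum>k\<in>UNIV. Re (B1'$i$k * B2'$k$i))"
      by (simp add: Re_sum)
    also have "\<dots> \<ge> (\<Sum>i\<in>UNIV. y i * z i)"
    proof (rule sum_mono)
      fix i
      have nn: "Re (B1'$i$k * B2'$k$i) \<ge> 0" if "k \<in> UNIV - {i}" for k
      proof -
        have ki: "k \<noteq> i" using that by simp
        have "B1'$k$i = cnj (B1'$i$k)" using saB1' unfolding self_adjoint_def by blast
        then have e: "B2'$k$i = cnj (B1'$i$k)" using offd[OF ki] by simp
        have "B1'$i$k * B2'$k$i = B1'$i$k * cnj (B1'$i$k)" by (simp only: e)
        also have "\<dots> = complex_of_real ((cmod (B1'$i$k))^2)" by (rule complex_norm_square[symmetric])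
        finally have "B1'$i$k * B2'$k$i = complex_of_real ((cmod (B1'$i$k))^2)" .
        then show ?thesis by simp
      qed
      have "(\<Sum>k\<in>UNIV. Re (B1'$i$k * B2'$k$i)) = Re (B1'$i$i * B2'$i$i) + (\<Sum>k\<in>UNIV-{i}. Re (B1'$i$k * B2'$k$i))"
        by (simp add: sum.remove)
      also have "\<dots> \<ge> Re (B1'$i$i * B2'$i$i)"
      proof -
        have "(\<Sum>k\<in>UNIV-{i}. Re (B1'$i$k * B2'$k$i)) \<ge> 0" by (rule sum_nonneg) (rule nn)
        then show ?thesis by linarith
      qed
      finally show "(\<Sum>k\<in>UNIV. Re (B1'$i$k * B2'$k$i)) \<ge> y i * z i" using B1ii B2ii by simp
    qed
    finally show ?thesis .
  qed
  define Sa where "Sa = (\<Sum>i\<in>UNIV. a i)"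
  define Sy where "Sy = (\<Sum>i\<in>UNIV. y i)"
  define Sz where "Sz = (\<Sum>i\<in>UNIV. z i)"
  define Sd where "Sd = (\<Sum>i\<in>UNIV. a i * (y i - z i))"
  define Syz where "Syz = (\<Sum>i\<in>UNIV. y i * z i)"
  have cC: "(of_nat CARD('n) + 1) / (of_nat CARD('n))^3 = complex_of_real ((d+1)/d^3)" unfolding d_def by simp
  have cE: "1 / (of_nat CARD('n))^2 = complex_of_real (1/d^2)" unfolding d_def by simp
  have "trace (werner ** kron Ja Jb1) - trace (werner ** kron Ja Jb2)
      = complex_of_real ((d+1)/d^3) * (trace Ja * (trace Jb1 - trace Jb2))
        - complex_of_real (1/d^2) * (trace (Ja ** Jb1) - trace (Ja ** Jb2))"
  proof -
    have gen: "c*(x*y1) - e*p1 - (c*(x*y2) - e*p2) = c*(x*(y1-y2)) - e*(p1-p2)" for c e x y1 y2 p1 p2 :: complex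
      by (simp add: algebra_simps)
    show ?thesis unfolding trace_werner cC cE by (rule gen)
  qed
  also have "trace (Ja ** Jb1) - trace (Ja ** Jb2) = trace (Ja ** D)"
    unfolding D_def by (simp add: matrix_sub_ldistrib trace_sub)
  finally have L: "trace (werner ** kron Ja Jb1) - trace (werner ** kron Ja Jb2)
      = complex_of_real ((d+1)/d^3 * Sa * (Sy - Sz) - 1/d^2 * Sd)"
    unfolding trA trB1 trB2 trAD Sa_def Sy_def Sz_def Sd_def by simp
  have R: "Re (trace (werner ** kron Jb1 Jb2)) = (d+1)/d^3 * Sy * Sz - 1/d^2 * Re (trace (Jb1 ** Jb2))"
    unfolding trace_werner cC cE trB1 trB2 Sy_def Sz_def by simp
  have cl: "\<bar>(d+1)*Sa*(Sy - Sz) - d*Sd\<bar> \<le> d^3 - (d+1)*Sy*Sz + d*Syz"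
    using classical[OF a1 y1 z1 d3'] unfolding d_def Sa_def Sy_def Sz_def Sd_def Syz_def .
  have dp: "d > 0" using d3 by simp
  have "\<bar>(d+1)/d^3 * Sa * (Sy - Sz) - 1/d^2 * Sd\<bar> = \<bar>(d+1)*Sa*(Sy - Sz) - d*Sd\<bar> / d^3"
  proof -
    have "(d+1)/d^3 * Sa * (Sy - Sz) - 1/d^2 * Sd = ((d+1)*Sa*(Sy - Sz) - d*Sd) / d^3"
      using dp by (simp add: field_simps power2_eq_square power3_eq_cube)
    then show ?thesis using dp by simp
  qed
  also have "\<dots> \<le> (d^3 - (d+1)*Sy*Sz + d*Syz) / d^3" using cl dp by (simp add: divide_right_mono)
  also have "\<dots> = 1 - (d+1)/d^3 * Sy * Sz + 1/d^2 * Syz"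
    using dp by (simp add: field_simps power2_eq_square power3_eq_cube)
  also have "\<dots> \<le> 1 - (d+1)/d^3 * Sy * Sz + 1/d^2 * Re (trace (Jb1 ** Jb2))"
    using trBB dp unfolding Syz_def by (simp add: divide_right_mono)
  finally have F: "\<bar>(d+1)/d^3 * Sa * (Sy - Sz) - 1/d^2 * Sd\<bar>
     \<le> 1 - (d+1)/d^3 * Sy * Sz + 1/d^2 * Re (trace (Jb1 ** Jb2))" .
  show ?thesis unfolding L R norm_of_real using F by linarith
qed

end
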